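(* Let $0<\beta_1<\beta_2$, let $g_{\mathrm{Foot},\beta_1,\beta_2}$ be the football soliton of the context, written on $S^2\setminus\{N,S\}$ as $g=\frac{1}{2\varphi(\tau)}d\tau\otimes d\tau+2\varphi(\tau)d\theta\otimes d\theta$ with $\tau\in(0,\beta_1+\beta_2)$, and let $a=a(\beta_1,\beta_2)$ be as in the context. Set $u=a(\beta_1+\beta_2-\tau)\in[0,a(\beta_1+\beta_2)]$ and regard $\varphi$ as a function of $u$. Then for every $L>0$ and every integer $k\ge0$, $$\frac{a}{\beta_2}\varphi(u)\longrightarrow\frac{e^u-1}{e^u}$$ uniformly in $C^k([0,L])$ as $\beta_1/\beta_2\to0$ (considering only $(\beta_1,\beta_2)$ with $L<a(\beta_1+\beta_2)$).
   Context: Regard $S^2=\mathbb{C}\cup\{\infty\}$ as the Riemann sphere with $N=\{z=0\}$, $S=\{z=\infty\}$, $z=|z|e^{i\theta}$. For $0<\beta_1<\beta_2$, the football soliton $g_{\mathrm{Foot},\beta_1,\beta_2}$ is the unique Riemannian metric on $S^2\setminus\{N,S\}$, compatible with the complex structure, with conical singularities of angle $2\pi\beta_1$ at $N$ and $2\pi\beta_2$ at $S$, of area $2\pi(\beta_1+\beta_2)$, whose Kähler form $\omega$ satisfies $\mathrm{Ric}\,\omega=\omega-\mathcal{L}_X\omega+2\pi(1-\beta_1)\delta_N+2\pi(1-\beta_2)\delta_S$ for a gradient vector field $X$. It is rotationally symmetric: $\omega=\sqrt{-1}\partial\bar\partial f(s)$ on $\mathbb{C}^*$ with $s=\log|z|^2$,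 $f$ strictly convex; $\tau=f'(s)$ (normalized so $\tau\in(0,\beta_1+\beta_2)$, $\tau\to0$ at $N$) and $\varphi(\tau)=f''(s)$. The number $a=a(\beta_1,\beta_2)$ is the unique element of $(0,1/\beta_1)$ with $a\beta_1-1+(a\beta_2+1)e^{-a(\beta_1+\beta_2)}=0$. *)

theory Defs
  imports "HOL-Analysis.Analysis"
begin

definition football_a :: "real \<Rightarrow> real \<Rightarrow> real" where
  "football_a b1 b2 = (THE a. 0 < a \<and> a < 1 / b1 \<and>
      a * b1 - 1 + (a * b2 + 1) * exp (- a * (b1 + b2)) = 0)"

text \<open>The rotationally symmetric soliton equation
  Ric w = w - L_X w reduces (with d/ds = phi d/dtau) to the linear ODE
  phi'(tau) = a phi(tau) - tau + b1, with phi(0) = phi(b1+b2) = 0,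
  phi'(0) = b1, phi'(b1+b2) = -b2 (cone angles), whose solution is the
  closed form below (its vanishing at tau = b1+b2 is exactly the equation
  defining a).\<close>
definition football_phi :: "real \<Rightarrow> real \<Rightarrow> real \<Rightarrow> real" where
  "football_phi b1 b2 \<tau> =
     (let a = football_a b1 b2 in
        ((a * b1 - 1) * exp (a * \<tau>) + a * (\<tau> - b1) + 1) / a\<^sup>2)"

definition football_phi_u :: "real \<Rightarrow> real \<Rightarrow> real \<Rightarrow> real" where
  "football_phi_u b1 b2 u =
     football_phi b1 b2 (b1 + b2 - u / football_a b1 b2)"

end

theory Submission
  imports Defs
begin

definition Hf :: "real \<Rightarrow> real \<Rightarrow> real \<Rightarrow> real" where
  "Hf b1 b2 x = exp (x * (b1 + b2)) * (1 - x * b1) - 1 - x * b2"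

lemma Hf_d1: "((Hf b1 b2) has_real_derivative
   (exp (x * (b1 + b2)) * (b2 - x * b1 * (b1 + b2)) - b2)) (at x)"
  unfolding Hf_def
  by (rule derivative_eq_intros refl | simp)+ (simp add: algebra_simps)

lemma Hf_d2: "((\<lambda>x. exp (x * (b1 + b2)) * (b2 - x * b1 * (b1 + b2)) - b2) has_real_derivative
   ((b1 + b2) * exp (x * (b1 + b2)) * (b2 - b1 - x * b1 * (b1 + b2)))) (at x)"
  by (rule derivative_eq_intros refl | simp)+ (simp add: algebra_simps)

lemma Hf_cont: "continuous_on S (Hf b1 b2)"
  unfolding Hf_def by (intro continuous_intros)

lemma Hf_pos:
  assumes "0 < b1" "b1 < b2" "0 < y" "y * (b1 + b2) * b1 < b2 - b1"
  shows "Hf b1 b2 y > 0" "y * b1 < 1"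
proof -
  let ?T = "b1 + b2"
  have yb1: "y * b1 < 1"
  proof -
    have "y * b1 * ?T < 1 * ?T" using assms by (simp add: algebra_simps)
    then show ?thesis using assms by (simp add: mult_less_cancel_right)
  qed
  then show "y * b1 < 1" .
  have e: "1 + y * ?T + (y * ?T)\<^sup>2 / 2 \<le> exp (y * ?T)"
    by (rule exp_lower_Taylor_quadratic) (use assms in simp)
  have "(1 + y * ?T + (y * ?T)\<^sup>2 / 2) * (1 - y * b1) \<le> exp (y * ?T) * (1 - y * b1)"
    using e yb1 by (intro mult_right_mono) auto
  moreover have "(1 + y * ?T + (y * ?T)\<^sup>2 / 2) * (1 - y * b1) - 1 - y * b2
      = y\<^sup>2 * ?T * ((b2 - b1) / 2 - y * ?T * b1 / 2)"
    by (simp add: field_simps power2_eq_square)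
  moreover have "y\<^sup>2 * ?T * ((b2 - b1) / 2 - y * ?T * b1 / 2) > 0"
    using assms by (intro mult_pos_pos) auto
  ultimately show "Hf b1 b2 y > 0" unfolding Hf_def by linarith
qed

lemma Hf_neg:
  assumes "0 < b1" "b1 < b2"
  shows "Hf b1 b2 (1 / b1) < 0"
  using assms unfolding Hf_def by (simp add: field_simps)

lemma Hf_uniq:
  assumes "0 < b1" "b1 < b2" "0 < x" "x < z" "Hf b1 b2 x = 0" "Hf b1 b2 z = 0"
  shows False
proof -
  let ?H = "Hf b1 b2"
  let ?H1 = "\<lambda>x. exp (x * (b1 + b2)) * (b2 - x * b1 * (b1 + b2)) - b2"
  have H0: "?H 0 = 0" by (simp add: Hf_def)
  have dif: "\<And>t. ?H differentiable (at t)" using Hf_d1 real_differentiable_def by blast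
  obtain c1 where c1: "0 < c1" "c1 < x" "DERIV ?H c1 :> 0"
    using Rolle[of 0 x ?H] assms H0 dif Hf_cont by auto
  obtain c2 where c2: "x < c2" "c2 < z" "DERIV ?H c2 :> 0"
    using Rolle[of x z ?H] assms dif Hf_cont by auto
  have e1: "?H1 c1 = 0" using DERIV_unique[OF c1(3) Hf_d1] by simp
  have e2: "?H1 c2 = 0" using DERIV_unique[OF c2(3) Hf_d1] by simp
  have e0: "?H1 0 = 0" by simp
  have dif1: "\<And>t. ?H1 differentiable (at t)" using Hf_d2 real_differentiable_def by blast
  have cont1: "continuous_on S ?H1" for S by (intro continuous_intros)
  obtain d1 where d1: "0 < d1" "d1 < c1" "DERIV ?H1 d1 :> 0"
    using Rolle[of 0 c1 ?H1] c1 e1 dif1 cont1 by auto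
  obtain d2 where d2: "c1 < d2" "d2 < c2" "DERIV ?H1 d2 :> 0"
    using Rolle[of c1 c2 ?H1] c1 c2 e1 e2 dif1 cont1 by auto
  have f1: "(b1 + b2) * exp (d1 * (b1 + b2)) * (b2 - b1 - d1 * b1 * (b1 + b2)) = 0"
    using DERIV_unique[OF d1(3) Hf_d2] by simp
  have f2: "(b1 + b2) * exp (d2 * (b1 + b2)) * (b2 - b1 - d2 * b1 * (b1 + b2)) = 0"
    using DERIV_unique[OF d2(3) Hf_d2] by simp
  have "b2 - b1 - d1 * b1 * (b1 + b2) = 0" "b2 - b1 - d2 * b1 * (b1 + b2) = 0"
    using f1 f2 assms by auto
  then have "d1 * (b1 * (b1 + b2)) = d2 * (b1 * (b1 + b2))" by (simp add: algebra_simps)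
  then have "d1 = d2" using assms by simp
  then show False using d1 d2 c1 by simp
qed

lemma eq_iff_Hf:
  "(a * b1 - 1 + (a * b2 + 1) * exp (- a * (b1 + b2)) = 0) \<longleftrightarrow> Hf b1 b2 a = 0"
proof -
  have "a * b1 - 1 + (a * b2 + 1) * exp (- a * (b1 + b2))
      = - Hf b1 b2 a * exp (- a * (b1 + b2))"
    unfolding Hf_def by (simp add: algebra_simps flip: exp_add)
  then show ?thesis by simp
qed

lemma Hf_root_between:
  assumes "0 < b1" "b1 < b2" "0 < y" "y * (b1 + b2) * b1 < b2 - b1"
  shows "\<exists>r. y < r \<and> r < 1 / b1 \<and> Hf b1 b2 r = 0"
proof -
  have p: "Hf b1 b2 y > 0" "y * b1 < 1" using Hf_pos[OF assms] by auto
  have yl: "y \<le> 1 / b1" using p(2) assms by (simp add: field_simps)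
  obtain r where r: "y \<le> r" "r \<le> 1 / b1" "Hf b1 b2 r = 0"
    using IVT2[of "Hf b1 b2" "1/b1" 0 y] Hf_neg[OF assms(1,2)] p yl
      Hf_cont continuous_on_eq_continuous_at[of UNIV "Hf b1 b2"] by auto
  then have "r \<noteq> y" "r \<noteq> 1 / b1" using p Hf_neg[OF assms(1,2)] by auto
  then show ?thesis using r by (intro exI[of _ r]) auto
qed

lemma football_a_props:
  assumes "0 < b1" "b1 < b2"
  shows "0 < football_a b1 b2" "football_a b1 b2 < 1 / b1"
    "Hf b1 b2 (football_a b1 b2) = 0"
    "\<And>y. 0 < y \<Longrightarrow> y * (b1 + b2) * b1 < b2 - b1 \<Longrightarrow> y < football_a b1 b2"
proof -
  define y0 where "y0 = (b2 - b1) / (2 * (b1 + b2) * b1)"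
  have "y0 * (b1 + b2) * b1 = (b2 - b1) / 2"
  proof -
    have "b1 + b2 \<noteq> 0" "b1 \<noteq> 0" using assms by auto
    then have "(b1 + b2) * b1 \<noteq> 0" by simp
    have "y0 * (b1 + b2) * b1 = ((b2 - b1) * ((b1 + b2) * b1)) / (2 * ((b1 + b2) * b1))"
      unfolding y0_def by (simp add: algebra_simps)
    also have "\<dots> = (b2 - b1) / 2" using \<open>(b1 + b2) * b1 \<noteq> 0\<close> by simp
    finally show ?thesis .
  qed
  moreover have "0 < y0" using assms unfolding y0_def by (intro divide_pos_pos) auto
  ultimately have y0: "0 < y0" "y0 * (b1 + b2) * b1 < b2 - b1"
    using assms by auto
  obtain r where r: "y0 < r" "r < 1 / b1" "Hf b1 b2 r = 0"
    using Hf_root_between[OF assms y0] by auto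
  have uniq: "s = r" if "0 < s" "Hf b1 b2 s = 0" for s
  proof (rule ccontr)
    assume "s \<noteq> r"
    then consider "s < r" | "r < s" by linarith
    then show False
    proof cases
      case 1 then show False using Hf_uniq[OF assms, of s r] that r by auto
    next
      case 2 then show False using Hf_uniq[OF assms, of r s] that r y0 by auto
    qed
  qed
  have "football_a b1 b2 = r"
    unfolding football_a_def
  proof (rule the_equality)
    show "0 < r \<and> r < 1 / b1 \<and> r * b1 - 1 + (r * b2 + 1) * exp (- r * (b1 + b2)) = 0"
      using r y0 eq_iff_Hf by auto
  next
    fix s assume "0 < s \<and> s < 1 / b1 \<and> s * b1 - 1 + (s * b2 + 1) * exp (- s * (b1 + b2)) = 0"
    then show "s = r" using uniq eq_iff_Hf by blast
  qed
  then show "0 < football_a b1 b2" "football_a b1 b2 < 1 / b1"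
    "Hf b1 b2 (football_a b1 b2) = 0" using r y0 by auto
  fix y assume "0 < y" "y * (b1 + b2) * b1 < b2 - b1"
  then obtain s where "y < s" "s < 1 / b1" "Hf b1 b2 s = 0"
    using Hf_root_between[OF assms] by blast
  then show "y < football_a b1 b2" using uniq[of s] \<open>football_a b1 b2 = r\<close> \<open>0 < y\<close> by auto
qed

lemma deriv_E: "deriv (\<lambda>v. p + q * exp (- v) + r * v) = (\<lambda>v::real. r + (- q) * exp (- v) + 0 * v)"
proof
  fix x :: real
  have "((\<lambda>v. p + q * exp (- v) + r * v) has_real_derivative (r + (- q) * exp (- x) + 0 * x)) (at x)"
    by (rule derivative_eq_intros refl | simp)+
  then show "deriv (\<lambda>v. p + q * exp (- v) + r * v) x = r + (- q) * exp (- x) + 0 * x"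
    by (rule DERIV_imp_deriv)
qed

lemma iter_deriv_E:
  "(deriv ^^ j) (\<lambda>v. p + q * exp (- v) + r * v) =
   (\<lambda>v::real. (if j = 0 then p else if j = 1 then r else 0) + (-1) ^ j * q * exp (- v)
      + (if j = 0 then r else 0) * v)"
proof (induction j arbitrary: p q r)
  case 0
  then show ?case by simp
next
  case (Suc j)
  have "(deriv ^^ Suc j) (\<lambda>v. p + q * exp (- v) + r * v)
      = (deriv ^^ j) (\<lambda>v. r + (- q) * exp (- v) + 0 * v)"
    by (simp only: funpow_Suc_right comp_def deriv_E)
  also have "\<dots> = (\<lambda>v::real. (if j = 0 then r else if j = 1 then 0 else 0) + (-1) ^ j * (- q) * exp (- v)
      + (if j = 0 then 0 else 0) * v)"
    by (rule Suc.IH)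
  finally show ?case by auto
qed

lemma phi_identity:
  assumes "0 < a" "0 < b2" "Hf b1 b2 a = 0" "football_a b1 b2 = a"
  shows "(\<lambda>v. football_a b1 b2 / b2 * football_phi_u b1 b2 v) =
    (\<lambda>v. (1 + 1 / (a * b2)) + (- (1 + 1 / (a * b2))) * exp (- v) + (- (1 / (a * b2))) * v)"
proof
  fix v :: real
  have h: "(a * b1 - 1) * exp (a * (b1 + b2)) = - (1 + a * b2)"
    using assms(3) unfolding Hf_def by (simp add: algebra_simps)
  have ex: "exp (a * (b1 + b2 - v / a)) = exp (a * (b1 + b2)) * exp (- v)"
    using assms(1) by (simp add: algebra_simps flip: exp_add)
  have lin: "a * (b1 + b2 - v / a - b1) = a * b2 - v"
    using assms(1) by (simp add: algebra_simps)
  have "football_phi_u b1 b2 v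
     = ((a * b1 - 1) * exp (a * (b1 + b2 - v / a)) + a * (b1 + b2 - v / a - b1) + 1) / a\<^sup>2"
    unfolding football_phi_u_def football_phi_def Let_def assms(4) by simp
  also have "\<dots> = (- (1 + a * b2) * exp (- v) + a * b2 - v + 1) / a\<^sup>2"
    unfolding ex lin mult.assoc[symmetric] h by simp
  finally have "a / b2 * football_phi_u b1 b2 v = a / b2 * ((- (1 + a * b2) * exp (- v) + a * b2 - v + 1) / a\<^sup>2)"
    by simp
  also have "\<dots> = (1 + 1 / (a * b2)) + (- (1 + 1 / (a * b2))) * exp (- v) + (- (1 / (a * b2))) * v"
    using assms(1,2) by (simp add: field_simps power2_eq_square)
  finally show "football_a b1 b2 / b2 * football_phi_u b1 b2 v =
    (1 + 1 / (a * b2)) + (- (1 + 1 / (a * b2))) * exp (- v) + (- (1 / (a * b2))) * v"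
    using assms(4) by simp
qed

lemma target_E: "(\<lambda>v. (exp v - 1) / exp v) = (\<lambda>v::real. 1 + (-1) * exp (- v) + 0 * v)"
  by (rule ext) (simp add: exp_minus field_simps)

theorem lemma2p3:
  fixes L :: real and k :: nat
  assumes "L > 0"
  shows "\<forall>\<epsilon>>0. \<exists>\<delta>>0. \<forall>b1 b2 :: real.
           0 < b1 \<and> b1 < b2 \<and> b1 / b2 < \<delta> \<and> L < football_a b1 b2 * (b1 + b2) \<longrightarrow>
           (\<forall>j\<le>k. \<forall>u\<in>{0..L}.
              \<bar>(deriv ^^ j) (\<lambda>v. football_a b1 b2 / b2 * football_phi_u b1 b2 v) u
               - (deriv ^^ j) (\<lambda>v. (exp v - 1) / exp v) u\<bar> < \<epsilon>)"
proof (intro allI impI)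
  fix \<epsilon> :: real assume "\<epsilon> > 0"
  define M where "M = (2 + L) / \<epsilon>"
  have M: "M > 0" using assms \<open>\<epsilon> > 0\<close> unfolding M_def by simp
  show "\<exists>\<delta>>0. \<forall>b1 b2 :: real.
           0 < b1 \<and> b1 < b2 \<and> b1 / b2 < \<delta> \<and> L < football_a b1 b2 * (b1 + b2) \<longrightarrow>
           (\<forall>j\<le>k. \<forall>u\<in>{0..L}.
              \<bar>(deriv ^^ j) (\<lambda>v. football_a b1 b2 / b2 * football_phi_u b1 b2 v) u
               - (deriv ^^ j) (\<lambda>v. (exp v - 1) / exp v) u\<bar> < \<epsilon>)"
  proof (intro exI[of _ "1 / (1 + 2 * M)"] conjI allI impI ballI)
    show "0 < 1 / (1 + 2 * M)" using M by simp
    fix b1 b2 :: real and j u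
    assume H: "0 < b1 \<and> b1 < b2 \<and> b1 / b2 < 1 / (1 + 2 * M) \<and> L < football_a b1 b2 * (b1 + b2)"
      and j: "j \<le> k" and u: "u \<in> {0..L}"
    have b: "0 < b1" "b1 < b2" using H by auto
    define a where "a = football_a b1 b2"
    have a: "0 < a" "Hf b1 b2 a = 0" using football_a_props[OF b] unfolding a_def by auto
    have "b1 * (1 + 2 * M) < b2" using H M b by (simp add: field_simps)
    define y where "y = 2 * M / (b1 + b2)"
    have yT: "y * (b1 + b2) = 2 * M" using b unfolding y_def by simp
    have y: "0 < y" "y * (b1 + b2) * b1 < b2 - b1"
      using yT M b \<open>b1 * (1 + 2 * M) < b2\<close> unfolding y_def by (auto simp: algebra_simps)
    have ya: "y < a" using football_a_props(4)[OF b y] unfolding a_def .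
    have "M < y * b2"
    proof -
      have "2 * M = y * (b1 + b2)" using yT by simp
      also have "\<dots> < y * (2 * b2)" using y b by (intro mult_strict_left_mono) auto
      finally show ?thesis by simp
    qed
    also have "y * b2 < a * b2" using ya b by simp
    finally have Mab: "M < a * b2" .
    define c where "c = 1 / (a * b2)"
    have c: "0 < c" "c * (2 + L) < \<epsilon>"
    proof -
      show "0 < c" using a b unfolding c_def by simp
      have "c < 1 / M" unfolding c_def using M Mab by (intro divide_strict_left_mono) auto
      then have "c * (2 + L) < 1 / M * (2 + L)" using assms by (intro mult_strict_right_mono) auto
      also have "\<dots> = \<epsilon>" unfolding M_def using assms \<open>\<epsilon> > 0\<close> by simp
      finally show "c * (2 + L) < \<epsilon>" .
    qed
    have eqs: "(\<lambda>v. football_a b1 b2 / b2 * football_phi_u b1 b2 v) =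
      (\<lambda>v. (1 + c) + (- (1 + c)) * exp (- v) + (- c) * v)"
      using phi_identity[OF a(1) _ a(2)] b unfolding a_def c_def by simp
    have "\<bar>(deriv ^^ j) (\<lambda>v. football_a b1 b2 / b2 * football_phi_u b1 b2 v) u
               - (deriv ^^ j) (\<lambda>v. (exp v - 1) / exp v) u\<bar>
      = \<bar>(if j = 0 then c else if j = 1 then - c else 0) + (-1) ^ j * (- c) * exp (- u)
          + (if j = 0 then - c else 0) * u\<bar>"
    proof -
      have "(deriv ^^ j) (\<lambda>v. football_a b1 b2 / b2 * football_phi_u b1 b2 v) u
               - (deriv ^^ j) (\<lambda>v. (exp v - 1) / exp v) u
        = ((if j = 0 then 1 + c else if j = 1 then - c else 0) + (-1) ^ j * (- (1 + c)) * exp (- u)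
          + (if j = 0 then - c else 0) * u) - ((if j = 0 then 1 else if j = 1 then 0 else 0) + (-1) ^ j * (-1) * exp (- u)
          + (if j = 0 then 0 else 0) * u)"
        by (simp only: eqs target_E iter_deriv_E)
      also have "\<dots> = (if j = 0 then c else if j = 1 then - c else 0) + (-1) ^ j * (- c) * exp (- u)
          + (if j = 0 then - c else 0) * u"
        by (simp add: ring_distribs)
      finally show ?thesis by simp
    qed
    also have "\<dots> \<le> c + c * exp (- u) + c * u"
    proof -
      have e1: "\<bar>(if j = 0 then c else if j = 1 then - c else 0)\<bar> \<le> c" using c by auto
      have e2: "\<bar>(-1) ^ j * (- c) * exp (- u)\<bar> = c * exp (- u)" using c by (simp add: abs_mult)
      have e3: "\<bar>(if j = 0 then - c else 0) * u\<bar> \<le> c * u" using c u by (auto simp: abs_mult)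
      have t1: "\<bar>x + y + z\<bar> \<le> \<bar>x\<bar> + \<bar>y\<bar> + \<bar>z\<bar>" for x y z :: real by linarith
      show ?thesis using t1 e1 e2 e3 by (smt (verit))
    qed
    also have "\<dots> \<le> c * (2 + L)"
    proof -
      have "exp (- u) \<le> 1" using u by simp
      then have "c * exp (- u) \<le> c" using c by (simp add: mult_left_le)
      moreover have "c * u \<le> c * L" using u c by (simp add: mult_left_mono)
      ultimately show ?thesis by (simp add: algebra_simps)
    qed
    also have "\<dots> < \<epsilon>" using c by simp
    finally show "\<bar>(deriv ^^ j) (\<lambda>v. football_a b1 b2 / b2 * football_phi_u b1 b2 v) u
               - (deriv ^^ j) (\<lambda>v. (exp v - 1) / exp v) u\<bar> < \<epsilon>" .
  qed
qed

end
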